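(* Let $G$ be a finite, simple, undirected, connected graph that is $C_4$-free, has order $n$, diameter $d$, and edge-connectivity at least $3$. Then $$d\leq \frac{2n-3}{5}.$$
   Context: A graph is $C_4$-free if it contains no cycle of length four as a (not necessarily induced) subgraph. The edge-connectivity of a connected graph is the minimum number of edges whose removal disconnects it. *)

theory Defs
  imports Complex_Main
begin

definition simple_graph :: "'a set \<Rightarrow> ('a \<Rightarrow> 'a \<Rightarrow> bool) \<Rightarrow> bool" where
  "simple_graph V E \<longleftrightarrow> finite V \<and> (\<forall>x y. E x y \<longrightarrow> x \<in> V \<and> y \<in> V)
     \<and> (\<forall>x y. E x y \<longrightarrow> E y x) \<and> (\<forall>x. \<not> E x x)"

text \<open>A walk of length (length xs - 1) given as its vertex sequence.\<close>
definition is_walk :: "'a set \<Rightarrow> ('a \<Rightarrow> 'a \<Rightarrow> bool) \<Rightarrow> 'a list \<Rightarrow> bool" where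
  "is_walk V E xs \<longleftrightarrow> xs \<noteq> [] \<and> set xs \<subseteq> V \<and>
     (\<forall>i. Suc i < length xs \<longrightarrow> E (xs ! i) (xs ! Suc i))"

definition connected_graph :: "'a set \<Rightarrow> ('a \<Rightarrow> 'a \<Rightarrow> bool) \<Rightarrow> bool" where
  "connected_graph V E \<longleftrightarrow> V \<noteq> {} \<and>
     (\<forall>u\<in>V. \<forall>v\<in>V. \<exists>xs. is_walk V E xs \<and> hd xs = u \<and> last xs = v)"

definition gdist :: "'a set \<Rightarrow> ('a \<Rightarrow> 'a \<Rightarrow> bool) \<Rightarrow> 'a \<Rightarrow> 'a \<Rightarrow> nat" where
  "gdist V E u v = (LEAST k. \<exists>xs. is_walk V E xs \<and> hd xs = u \<and> last xs = v \<and> length xs = Suc k)"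

definition diameter :: "'a set \<Rightarrow> ('a \<Rightarrow> 'a \<Rightarrow> bool) \<Rightarrow> nat" where
  "diameter V E = Max {gdist V E u v | u v. u \<in> V \<and> v \<in> V}"

definition C4_free :: "('a \<Rightarrow> 'a \<Rightarrow> bool) \<Rightarrow> bool" where
  "C4_free E \<longleftrightarrow> \<not> (\<exists>a b c d. distinct [a, b, c, d] \<and> E a b \<and> E b c \<and> E c d \<and> E d a)"

definition edges :: "('a \<Rightarrow> 'a \<Rightarrow> bool) \<Rightarrow> 'a set set" where
  "edges E = {{x, y} | x y. E x y}"

definition delete_edges :: "('a \<Rightarrow> 'a \<Rightarrow> bool) \<Rightarrow> 'a set set \<Rightarrow> 'a \<Rightarrow> 'a \<Rightarrow> bool" where
  "delete_edges E F = (\<lambda>x y. E x y \<and> {x, y} \<notin> F)"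

text \<open>Edge-connectivity at least k (standard convention: at least two vertices,
and deleting fewer than k edges never disconnects the graph).\<close>
definition edge_connectivity_ge :: "'a set \<Rightarrow> ('a \<Rightarrow> 'a \<Rightarrow> bool) \<Rightarrow> nat \<Rightarrow> bool" where
  "edge_connectivity_ge V E k \<longleftrightarrow> card V \<ge> 2 \<and>
     (\<forall>F. F \<subseteq> edges E \<and> card F < k \<longrightarrow> connected_graph V (delete_edges E F))"

end

theory Submission
  imports Defs
begin


definition Lf :: "nat \<Rightarrow> nat \<Rightarrow> nat \<Rightarrow> nat" where
  "Lf a b c = (if c = 1 then 3 else if c = 2 then (if b = 2 then (if a \<ge> 4 then 4 else 3)
      else if b = 3 then 4 else 5) else if b = 1 then 3 else if b = 2 then (if c = 3 then 5 else 6) else 6)"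

lemma Lf_ge: "Lf a b c \<ge> 3" by (simp add: Lf_def)

lemma seq_bound:
  fixes n :: "nat \<Rightarrow> nat" and d :: nat
  assumes d1: "d \<ge> 1" and n0: "n 0 = 1"
  and C1: "\<And>i. i < d \<Longrightarrow> n i * n (Suc i) \<ge> 3"
  and B4: "\<And>i. n i = 1 \<Longrightarrow> i+2 \<le> d \<Longrightarrow> n (i+2) \<ge> 4"
  and C3: "\<And>i. n i = 1 \<Longrightarrow> 2 \<le> i \<Longrightarrow> i \<le> d \<Longrightarrow> n (i-2) \<ge> 3"
  and D: "\<And>i. n i = 2 \<Longrightarrow> n (Suc i) = 2 \<Longrightarrow> 1 \<le> i \<Longrightarrow> i+2 \<le> d \<Longrightarrow>
            n (i-1) \<ge> 3 \<and> n (i+2) \<ge> 3 \<and> n (i-1) + n (i+2) \<ge> 7"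
  shows "5*d + 3 \<le> 2 * (\<Sum>i\<le>d. n i)"
proof -
  have inv: "k \<le> d \<Longrightarrow> 5*k + Lf (n (k-2)) (n (k-1)) (n k) \<le> 2 * (\<Sum>i\<le>k. n i)" if "k \<ge> 1" for k
    using that
  proof (induction k rule: dec_induct)
    case base
    have "n 1 \<ge> 3" using C1[of 0] d1 n0 by simp
    then show ?case using n0 by (simp add: Lf_def)
  next
    case (step k)
    define a where "a = n (k-2)"
    define b where "b = n (k-1)"
    define c where "c = n k"
    define x where "x = n (Suc k)"
    have IH: "5*k + Lf a b c \<le> 2 * (\<Sum>i\<le>k. n i)" using step a_def b_def c_def by simp
    have S: "(\<Sum>i\<le>Suc k. n i) = (\<Sum>i\<le>k. n i) + x" by (simp add: x_def)
    have cx: "c * x \<ge> 3" using C1[of k] step c_def x_def by simp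
    have bc: "b * c \<ge> 3" using C1[of "k-1"] step b_def c_def by simp
    have b4: "b = 1 \<Longrightarrow> x \<ge> 4" using B4[of "k-1"] step b_def x_def by simp
    have c3: "x = 1 \<Longrightarrow> b \<ge> 3" using C3[of "Suc k"] step b_def x_def by simp
    have dd: "b = 2 \<Longrightarrow> c = 2 \<Longrightarrow> a \<ge> 3 \<and> x \<ge> 3 \<and> a + x \<ge> 7"
    proof -
      assume "b = 2" "c = 2"
      have "k \<noteq> 1" using n0 \<open>b = 2\<close> b_def by auto
      then have "k - 1 \<ge> 1" using step by auto
      then show ?thesis using D[of "k-1"] step \<open>b = 2\<close> \<open>c = 2\<close> a_def b_def c_def x_def
        by (simp add: numeral_2_eq_2)
    qed
    have "5*(Suc k) + Lf b c x \<le> 2 * ((\<Sum>i\<le>k. n i) + x)"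
    proof -
      have key: "Lf b c x + 5 \<le> Lf a b c + 2 * x"
      proof (cases "x = 1")
        case True
        then show ?thesis using c3 cx b4 by (auto simp: Lf_def)
      next
        case x1: False
        show ?thesis
        proof (cases "x = 2")
          case True
          then show ?thesis using cx bc b4 dd by (auto simp: Lf_def)
        next
          case False
          then have "x \<ge> 3" using cx x1 by (cases x) (auto simp: numeral_eq_Suc)
          then show ?thesis using bc b4 dd by (auto simp: Lf_def)
        qed
      qed
      then show ?thesis using IH by simp
    qed
    then show ?case using S by (simp add: x_def b_def c_def)
  qed
  show ?thesis using inv[of d] d1 Lf_ge[of "n (d-2)" "n (d-1)" "n d"] by simp
qed


locale G =
  fixes V :: "'a set" and E :: "'a \<Rightarrow> 'a \<Rightarrow> bool"
  assumes sg: "simple_graph V E" and cg: "connected_graph V E" and c4: "C4_free E"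
    and ec: "edge_connectivity_ge V E 3"
begin

lemma finV: "finite V" using sg by (simp add: simple_graph_def)
lemma Ein: "E x y \<Longrightarrow> x \<in> V \<and> y \<in> V" using sg by (simp add: simple_graph_def)
lemma Esym: "E x y \<Longrightarrow> E y x" using sg by (simp add: simple_graph_def)
lemma Eirr: "\<not> E x x" using sg by (simp add: simple_graph_def)
lemma cardV: "card V \<ge> 2" using ec by (simp add: edge_connectivity_ge_def)

definition W :: "nat \<Rightarrow> 'a \<Rightarrow> 'a \<Rightarrow> bool" where
  "W k a b \<longleftrightarrow> (\<exists>xs. is_walk V E xs \<and> hd xs = a \<and> last xs = b \<and> length xs = Suc k)"

lemma gdist_W: "gdist V E a b = (LEAST k. W k a b)" by (simp add: gdist_def W_def)

lemma W_exists: "a \<in> V \<Longrightarrow> b \<in> V \<Longrightarrow> \<exists>k. W k a b"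
proof -
  assume "a \<in> V" "b \<in> V"
  then obtain xs where "is_walk V E xs" "hd xs = a" "last xs = b"
    using cg by (auto simp: connected_graph_def)
  moreover then have "length xs = Suc (length xs - 1)" by (cases xs) (auto simp: is_walk_def)
  ultimately show ?thesis unfolding W_def by blast
qed

lemma W_gdist: "a \<in> V \<Longrightarrow> b \<in> V \<Longrightarrow> W (gdist V E a b) a b"
  unfolding gdist_W by (rule LeastI_ex) (rule W_exists)

lemma gdist_le: "W k a b \<Longrightarrow> gdist V E a b \<le> k"
  unfolding gdist_W by (rule Least_le)

lemma W_refl: "a \<in> V \<Longrightarrow> W 0 a a"
  unfolding W_def by (rule exI[of _ "[a]"]) (simp add: is_walk_def)

lemma W0: "W 0 a b \<Longrightarrow> a = b"
  unfolding W_def by (auto simp: length_Suc_conv)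

lemma W_snoc: assumes "W k a x" "E x y" shows "W (Suc k) a y"
proof -
  obtain xs where xs: "is_walk V E xs" "hd xs = a" "last xs = x" "length xs = Suc k"
    using assms(1) by (auto simp: W_def)
  have ne: "xs \<noteq> []" using xs by (simp add: is_walk_def)
  have "is_walk V E (xs @ [y])"
    unfolding is_walk_def
  proof (intro conjI allI impI)
    show "xs @ [y] \<noteq> []" by simp
    show "set (xs @ [y]) \<subseteq> V" using xs(1) Ein[OF assms(2)] by (auto simp: is_walk_def)
  next
    fix i assume i: "Suc i < length (xs @ [y])"
    show "E ((xs @ [y]) ! i) ((xs @ [y]) ! Suc i)"
    proof (cases "Suc i < length xs")
      case True
      then show ?thesis using xs(1) by (simp add: nth_append is_walk_def)
    next
      case False
      then have "i = length xs - 1" using i by simp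
      then have "(xs @ [y]) ! i = x" "(xs @ [y]) ! Suc i = y"
        using ne xs(3) by (auto simp: nth_append last_conv_nth)
      then show ?thesis using assms(2) by simp
    qed
  qed
  moreover have "hd (xs @ [y]) = a" using ne xs(2) by simp
  ultimately show ?thesis unfolding W_def using xs(4) by (intro exI[of _ "xs @ [y]"]) simp
qed

lemma W_butlast: assumes "W (Suc k) a y" shows "\<exists>x. W k a x \<and> E x y"
proof -
  obtain xs where xs: "is_walk V E xs" "hd xs = a" "last xs = y" "length xs = Suc (Suc k)"
    using assms by (auto simp: W_def)
  define ys where "ys = butlast xs"
  have ly: "length ys = Suc k" using xs(4) by (simp add: ys_def)
  have nth: "\<And>i. i < length ys \<Longrightarrow> ys ! i = xs ! i" by (simp add: ys_def nth_butlast)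
  have w: "is_walk V E ys"
    unfolding is_walk_def
  proof (intro conjI allI impI)
    show "ys \<noteq> []" using ly by auto
    show "set ys \<subseteq> V" using xs(1) by (auto simp: ys_def is_walk_def dest: in_set_butlastD)
  next
    fix i assume "Suc i < length ys"
    then show "E (ys ! i) (ys ! Suc i)" using xs(1) nth ly xs(4) by (auto simp: is_walk_def)
  qed
  have "hd ys = a"
  proof -
    have "ys \<noteq> []" using ly by auto
    then have "hd ys = ys ! 0" by (simp add: hd_conv_nth)
    also have "\<dots> = xs ! 0" using nth ly by simp
    also have "\<dots> = hd xs" using xs(4) by (cases xs) auto
    finally show ?thesis using xs(2) by simp
  qed
  moreover have "last ys = xs ! k" using ly nth[of k] by (metis last_conv_nth diff_Suc_1 lessI list.size(3) nat.simps(3))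
  moreover have "E (xs ! k) y" using xs(1,3,4) by (auto simp: is_walk_def last_conv_nth)
  ultimately show ?thesis using w ly unfolding W_def by blast
qed

definition lay :: "'a \<Rightarrow> nat \<Rightarrow> 'a set" where
  "lay u i = {x \<in> V. gdist V E u x = i}"

lemma gdist_self: "u \<in> V \<Longrightarrow> gdist V E u u = 0"
  using gdist_le[OF W_refl] by simp

lemma gdist_0: "u \<in> V \<Longrightarrow> x \<in> V \<Longrightarrow> gdist V E u x = 0 \<Longrightarrow> x = u"
  using W_gdist[of u x] W0 by force

lemma gdist_edge: "u \<in> V \<Longrightarrow> E x y \<Longrightarrow> gdist V E u y \<le> Suc (gdist V E u x)"
  using W_gdist[of u x] Ein[of x y] W_snoc gdist_le by blast

lemma adj_dist: "u \<in> V \<Longrightarrow> E x y \<Longrightarrow> gdist V E u y \<le> Suc (gdist V E u x) \<and> gdist V E u x \<le> Suc (gdist V E u y)"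
  using gdist_edge Esym by blast

lemma gdist_pred: assumes "u \<in> V" "y \<in> V" "gdist V E u y = Suc k"
  shows "\<exists>x. E x y \<and> gdist V E u x = k"
proof -
  obtain x where x: "W k u x" "E x y" using W_butlast W_gdist[of u y] assms by force
  have "gdist V E u x \<le> k" using gdist_le[OF x(1)] .
  moreover have "gdist V E u y \<le> Suc (gdist V E u x)" using gdist_edge[OF assms(1) x(2)] .
  ultimately show ?thesis using x assms(3) by (intro exI[of _ x]) simp
qed

lemma lay_0: "u \<in> V \<Longrightarrow> lay u 0 = {u}"
  using gdist_0 gdist_self by (auto simp: lay_def)

definition bd :: "'a set \<Rightarrow> 'a set set" where
  "bd S = {{x, y} | x y. E x y \<and> x \<in> S \<and> y \<notin> S}"

lemma cut3:
  assumes S: "S \<subseteq> V" and a: "a \<in> S" and b: "b \<in> V" "b \<notin> S" and T: "bd S \<subseteq> T" "finite T"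
  shows "3 \<le> card T"
proof (rule ccontr)
  assume "\<not> 3 \<le> card T"
  then have "card (bd S) < 3" using card_mono[OF T(2) T(1)] by linarith
  moreover have "bd S \<subseteq> edges E" by (auto simp: bd_def edges_def)
  ultimately have "connected_graph V (delete_edges E (bd S))"
    using ec by (simp add: edge_connectivity_ge_def)
  then obtain xs where xs: "is_walk V (delete_edges E (bd S)) xs" "hd xs = a" "last xs = b"
    using a S b unfolding connected_graph_def by blast
  have ne: "xs \<noteq> []" using xs by (simp add: is_walk_def)
  have all: "\<forall>i<length xs. xs ! i \<in> S"
  proof (intro allI impI)
    fix i assume "i < length xs" then show "xs ! i \<in> S"
    proof (induction i)
      case 0 then show ?case using xs(2) a ne by (simp add: hd_conv_nth)
    next
      case (Suc i)
      then have si: "xs ! i \<in> S" by simp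
      have "delete_edges E (bd S) (xs ! i) (xs ! Suc i)" using xs(1) Suc.prems by (auto simp: is_walk_def)
      then have "E (xs ! i) (xs ! Suc i)" "{xs ! i, xs ! Suc i} \<notin> bd S" by (auto simp: delete_edges_def)
      then show ?case using si unfolding bd_def by blast
    qed
  qed
  then have "last xs \<in> S" using ne by (simp add: last_conv_nth)
  then show False using xs(3) b by simp
qed

lemma deg3: assumes "w \<in> V" shows "\<not> {y. E w y} \<subseteq> {p, q}"
proof
  assume sub: "{y. E w y} \<subseteq> {p, q}"
  obtain b where b: "b \<in> V" "b \<noteq> w"
  proof -
    have "\<not> V \<subseteq> {w}" using cardV finV card_mono[of "{w}" V] by auto
    then show ?thesis using that by auto
  qed
  have "bd {w} \<subseteq> (\<lambda>y. {w, y}) ` {p, q}" using sub by (auto simp: bd_def insert_commute)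
  then have "3 \<le> card ((\<lambda>y. {w, y}) ` {p, q})"
    using cut3[of "{w}" w b] assms b by auto
  moreover have "card ((\<lambda>y. {w, y}) ` {p, q}) \<le> 2"
    by (rule order_trans[OF card_image_le]) (auto simp: card_insert_le_m1)
  ultimately show False by simp
qed

lemma common: "x \<noteq> y \<Longrightarrow> E x p \<Longrightarrow> E y p \<Longrightarrow> E x q \<Longrightarrow> E y q \<Longrightarrow> p \<noteq> q \<Longrightarrow> False"
  using c4 Esym Eirr unfolding C4_free_def
  by (metis distinct_length_2_or_more distinct_singleton)

end

context G begin

lemma lay_sub: "lay u i \<subseteq> V" by (auto simp: lay_def)
lemma fin_lay: "finite (lay u i)" using finite_subset[OF lay_sub finV] .
lemma in_lay: "x \<in> lay u i \<longleftrightarrow> x \<in> V \<and> gdist V E u x = i" by (simp add: lay_def)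

lemma nbr_lay: "u \<in> V \<Longrightarrow> x \<in> lay u (Suc i) \<Longrightarrow> E x y \<Longrightarrow> y \<in> lay u i \<or> y \<in> lay u (Suc i) \<or> y \<in> lay u (Suc (Suc i))"
  using adj_dist[of u x y] Ein[of x y] by (auto simp: lay_def)

lemma bd_layer: assumes u: "u \<in> V"
  shows "bd {w \<in> V. gdist V E u w \<le> j} \<subseteq> {{b, c} | b c. b \<in> lay u j \<and> c \<in> lay u (Suc j) \<and> E b c}"
proof
  fix e assume "e \<in> bd {w \<in> V. gdist V E u w \<le> j}"
  then obtain x y where e: "e = {x, y}" "E x y" "x \<in> V" "gdist V E u x \<le> j" "\<not> (y \<in> V \<and> gdist V E u y \<le> j)"
    unfolding bd_def by blast
  have "y \<in> V" using Ein[OF e(2)] by simp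
  then have "gdist V E u y > j" using e(5) by simp
  moreover have "gdist V E u y \<le> Suc (gdist V E u x)" "gdist V E u x \<le> Suc (gdist V E u y)" using adj_dist[OF u e(2)] by auto
  ultimately have "gdist V E u y = Suc j" "gdist V E u x = j" using e(4) by auto
  then show "e \<in> {{b, c} | b c. b \<in> lay u j \<and> c \<in> lay u (Suc j) \<and> E b c}"
    using e \<open>y \<in> V\<close> by (auto simp: lay_def)
qed

lemma S_facts: assumes "u \<in> V" "v \<in> V" "j < gdist V E u v"
  shows "{w \<in> V. gdist V E u w \<le> j} \<subseteq> V" "u \<in> {w \<in> V. gdist V E u w \<le> j}" "v \<notin> {w \<in> V. gdist V E u w \<le> j}"
  using assms gdist_self by auto

lemma C1: assumes u: "u \<in> V" and v: "v \<in> V" and j: "j < gdist V E u v"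
  shows "3 \<le> card (lay u j) * card (lay u (Suc j))"
proof -
  let ?T = "(\<lambda>(b, c). {b, c}) ` (lay u j \<times> lay u (Suc j))"
  have "bd {w \<in> V. gdist V E u w \<le> j} \<subseteq> ?T" using bd_layer[OF u, of j] by auto
  moreover have "finite ?T" using fin_lay by auto
  ultimately have "3 \<le> card ?T" using cut3 S_facts[OF u v j] v by blast
  also have "card ?T \<le> card (lay u j \<times> lay u (Suc j))" by (rule card_image_le) (simp add: fin_lay)
  finally show ?thesis by (simp add: card_cartesian_product)
qed

lemma C3: assumes u: "u \<in> V" and Li: "lay u i = {x}" and i2: "2 \<le> i"
  shows "3 \<le> card (lay u (i - 2))"
proof -
  have x: "x \<in> V" "gdist V E u x = i" using Li by (auto simp: lay_def)
  define S where "S = {w \<in> V. gdist V E u w \<le> i - 1}"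
  define Y where "Y = lay u (i - 1) \<inter> {y. E y x}"
  have "bd S \<subseteq> (\<lambda>y. {y, x}) ` Y"
  proof
    fix e assume "e \<in> bd S"
    then obtain w w' where e: "e = {w, w'}" "E w w'" "w \<in> V" "gdist V E u w \<le> i - 1" "\<not> (w' \<in> V \<and> gdist V E u w' \<le> i - 1)"
      unfolding bd_def S_def by blast
    have "w' \<in> V" using Ein[OF e(2)] by simp
    then have "gdist V E u w' > i - 1" using e(5) by simp
    moreover have "gdist V E u w' \<le> Suc (gdist V E u w)" "gdist V E u w \<le> Suc (gdist V E u w')" using adj_dist[OF u e(2)] by auto
    ultimately have g: "gdist V E u w' = i" "gdist V E u w = i - 1" using e(4) i2 by auto
    then have "w' = x" using Li \<open>w' \<in> V\<close> by (auto simp: lay_def)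
    then show "e \<in> (\<lambda>y. {y, x}) ` Y" using e g by (auto simp: Y_def lay_def)
  qed
  moreover have "finite ((\<lambda>y. {y, x}) ` Y)" using fin_lay by (simp add: Y_def)
  moreover have "S \<subseteq> V" "u \<in> S" "x \<notin> S" using u x i2 gdist_self by (auto simp: S_def)
  ultimately have "3 \<le> card ((\<lambda>y. {y, x}) ` Y)" using cut3 x by blast
  also have "\<dots> \<le> card Y" by (rule card_image_le) (simp add: Y_def fin_lay)
  finally have cY: "3 \<le> card Y" .
  have "\<forall>y\<in>Y. \<exists>w. w \<in> lay u (i - 2) \<and> E w y"
  proof
    fix y assume "y \<in> Y"
    then have "y \<in> V" "gdist V E u y = Suc (i - 2)" using i2 by (auto simp: Y_def lay_def)
    then obtain w where "E w y" "gdist V E u w = i - 2" using gdist_pred u by blast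
    then show "\<exists>w. w \<in> lay u (i - 2) \<and> E w y" using Ein by (auto simp: lay_def)
  qed
  then obtain f where f: "\<forall>y\<in>Y. f y \<in> lay u (i - 2) \<and> E (f y) y" by metis
  have "inj_on f Y"
  proof (rule inj_onI, rule ccontr)
    fix y1 y2 assume y: "y1 \<in> Y" "y2 \<in> Y" "f y1 = f y2" "y1 \<noteq> y2"
    have "f y1 \<noteq> x" using f y(1) x i2 by (auto simp: lay_def)
    moreover have "E x y1" "E x y2" using y by (auto simp: Y_def intro: Esym)
    ultimately show False using common[of "f y1" x y1 y2] f y by auto
  qed
  then have "card (f ` Y) = card Y" by (rule card_image)
  moreover have "f ` Y \<subseteq> lay u (i - 2)" using f by auto
  ultimately show ?thesis using cY card_mono[OF fin_lay[of u "i - 2"], of "f ` Y"] by linarith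
qed

end


context G begin

lemma card_ge4: "finite Z \<Longrightarrow> a \<in> Z \<Longrightarrow> b \<in> Z \<Longrightarrow> c \<in> Z \<Longrightarrow> e \<in> Z \<Longrightarrow> distinct [a,b,c,e] \<Longrightarrow> 4 \<le> card Z"
proof -
  assume "finite Z" "a \<in> Z" "b \<in> Z" "c \<in> Z" "e \<in> Z" "distinct [a,b,c,e]"
  then have "card {a,b,c,e} \<le> card Z" by (intro card_mono) auto
  moreover have "card {a,b,c,e} = 4" using \<open>distinct [a,b,c,e]\<close> by simp
  ultimately show ?thesis by simp
qed

lemma B4: assumes u: "u \<in> V" and v: "v \<in> V" and Li: "lay u i = {x}" and d: "Suc (Suc i) \<le> gdist V E u v"
  shows "4 \<le> card (lay u (Suc (Suc i)))"
proof -
  define Y where "Y = lay u (Suc i)"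
  define Z where "Z = lay u (Suc (Suc i))"
  have x: "x \<in> V" "gdist V E u x = i" using Li by (auto simp: lay_def)
  have hY: "\<forall>y\<in>Y. E x y"
  proof
    fix y assume "y \<in> Y"
    then have "y \<in> V" "gdist V E u y = Suc i" by (auto simp: Y_def lay_def)
    then obtain w where "E w y" "gdist V E u w = i" using gdist_pred u by blast
    then have "w \<in> lay u i" using Ein by (auto simp: lay_def)
    then show "E x y" using Li \<open>E w y\<close> by auto
  qed
  have nb: "\<And>y w. y \<in> Y \<Longrightarrow> E y w \<Longrightarrow> w = x \<or> w \<in> Y \<or> w \<in> Z"
    using nbr_lay[OF u] Li unfolding Y_def Z_def by blast
  have xY: "\<And>y. y \<in> Y \<Longrightarrow> x \<noteq> y" using x by (auto simp: Y_def lay_def)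
  have xZ: "\<And>z. z \<in> Z \<Longrightarrow> x \<noteq> z" using x by (auto simp: Z_def lay_def)
  have YZ: "\<And>z. z \<in> Z \<Longrightarrow> z \<notin> Y" by (auto simp: Z_def Y_def lay_def)
  have Yuniq: "\<And>y t t'. y \<in> Y \<Longrightarrow> t \<in> Y \<Longrightarrow> t' \<in> Y \<Longrightarrow> E y t \<Longrightarrow> E y t' \<Longrightarrow> t = t'"
    using common xY hY by blast
  have Zuniq: "\<And>z t t'. z \<in> Z \<Longrightarrow> t \<in> Y \<Longrightarrow> t' \<in> Y \<Longrightarrow> E z t \<Longrightarrow> E z t' \<Longrightarrow> t = t'"
    using common xZ hY by blast
  have hasZ: "\<And>y. y \<in> Y \<Longrightarrow> \<exists>z\<in>Z. E y z"
  proof (rule ccontr)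
    fix y assume y: "y \<in> Y" and nz: "\<not> (\<exists>z\<in>Z. E y z)"
    show False
    proof (cases "\<exists>t\<in>Y. E y t")
      case True
      then obtain t where t: "t \<in> Y" "E y t" by blast
      have "{w. E y w} \<subseteq> {x, t}" using nb[OF y] nz Yuniq[OF y t(1)] t(2) by auto
      then show False using deg3 y by (auto simp: Y_def lay_def)
    next
      case False
      have "{w. E y w} \<subseteq> {x, x}" using nb[OF y] nz False by auto
      then show False using deg3[of y x x] y by (auto simp: Y_def lay_def)
    qed
  qed
  have two: "\<And>y. y \<in> Y \<Longrightarrow> \<not> (\<exists>t\<in>Y. E y t) \<Longrightarrow> \<exists>z z'. z \<in> Z \<and> z' \<in> Z \<and> z \<noteq> z' \<and> E y z \<and> E y z'"
  proof (rule ccontr)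
    fix y assume y: "y \<in> Y" and nt: "\<not> (\<exists>t\<in>Y. E y t)" and nz: "\<not> (\<exists>z z'. z \<in> Z \<and> z' \<in> Z \<and> z \<noteq> z' \<and> E y z \<and> E y z')"
    obtain z where z: "z \<in> Z" "E y z" using hasZ[OF y] by blast
    have "{w. E y w} \<subseteq> {x, z}" using nb[OF y] nt nz z by blast
    then show False using deg3 y by (auto simp: Y_def lay_def)
  qed
  obtain f where f: "\<forall>y\<in>Y. f y \<in> Z \<and> E y (f y)" using bchoice[of Y "\<lambda>y z. z \<in> Z \<and> E y z"] hasZ by blast
  have inj: "inj_on f Y"
  proof (rule inj_onI)
    fix y1 y2 assume "y1 \<in> Y" "y2 \<in> Y" "f y1 = f y2"
    then show "y1 = y2" using Zuniq[of "f y1" y1 y2] f Esym[of y1 "f y1"] Esym[of y2 "f y2"] by auto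
  qed
  have finZ: "finite Z" by (simp add: Z_def fin_lay)
  have fY: "f ` Y \<subseteq> Z" using f by auto
  have cY: "3 \<le> card Y" using C1[OF u v, of i] d Li by (simp add: Y_def)
  show ?thesis
  proof (cases "card Y = 3")
    case False
    then have "4 \<le> card Y" using cY by simp
    also have "card Y = card (f ` Y)" using card_image[OF inj] by simp
    also have "\<dots> \<le> card Z" using card_mono[OF finZ fY] .
    finally show ?thesis by (simp add: Z_def)
  next
    case True
    then obtain a b c where abc: "Y = {a, b, c}" "a \<noteq> b" "b \<noteq> c" "a \<noteq> c"
      unfolding card_3_iff by blast
    have aY: "a \<in> Y" and bY: "b \<in> Y" and cY': "c \<in> Y" using abc(1) by auto
    have "\<exists>y0\<in>Y. \<not> (\<exists>t\<in>Y. E y0 t)"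
    proof (rule ccontr)
      assume "\<not> ?thesis"
      then have all: "\<forall>y\<in>Y. \<exists>t\<in>Y. E y t" by blast
      obtain ta where ta: "ta \<in> Y" "E a ta" using all aY by blast
      obtain tb where tb: "tb \<in> Y" "E b tb" using all bY by blast
      obtain tc where tc: "tc \<in> Y" "E c tc" using all cY' by blast
      have ya: "E a b \<or> E a c" using ta abc(1) Eirr[of a] by auto
      have yb: "E b a \<or> E b c" using tb abc(1) Eirr[of b] by auto
      have yc: "E c a \<or> E c b" using tc abc(1) Eirr[of c] by auto
      have ua: "\<And>t t'. t \<in> Y \<Longrightarrow> t' \<in> Y \<Longrightarrow> E a t \<Longrightarrow> E a t' \<Longrightarrow> t = t'" by (rule Yuniq[OF aY])
      have ub: "\<And>t t'. t \<in> Y \<Longrightarrow> t' \<in> Y \<Longrightarrow> E b t \<Longrightarrow> E b t' \<Longrightarrow> t = t'" by (rule Yuniq[OF bY])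
      have uc: "\<And>t t'. t \<in> Y \<Longrightarrow> t' \<in> Y \<Longrightarrow> E c t \<Longrightarrow> E c t' \<Longrightarrow> t = t'" by (rule Yuniq[OF cY'])
      show False
      proof (cases "E a b")
        case True
        have "\<not> E a c" using ua[OF bY cY'] True abc(3) by auto
        moreover have "\<not> E b c" using ub[OF aY cY'] True Esym[of a b] abc(4) by auto
        ultimately show False using yc Esym[of c a] Esym[of c b] by blast
      next
        case False
        then have "E a c" using ya by simp
        have "E b c" using yb False Esym[of b a] by blast
        show False using uc[OF aY bY] \<open>E a c\<close> \<open>E b c\<close> Esym[of a c] Esym[of b c] abc(2) by auto
      qed
    qed
    then obtain y0 where y0: "y0 \<in> Y" "\<not> (\<exists>t\<in>Y. E y0 t)" by blast
    then obtain z z' where zz: "z \<in> Z" "z' \<in> Z" "z \<noteq> z'" "E y0 z" "E y0 z'" using two by blast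
    obtain z1 where z1: "z1 \<in> Z" "E y0 z1" "z1 \<noteq> f y0"
    proof (cases "z = f y0")
      case True then show ?thesis using that zz by auto
    next
      case False then show ?thesis using that zz by auto
    qed
    have "z1 \<notin> f ` Y"
    proof
      assume "z1 \<in> f ` Y"
      then obtain y' where "y' \<in> Y" "z1 = f y'" by blast
      then have "y' = y0" using Zuniq[of z1 y' y0] f z1 y0 Esym[of y' z1] Esym[of y0 z1] by auto
      then show False using z1 \<open>z1 = f y'\<close> by simp
    qed
    then have "card (insert z1 (f ` Y)) = Suc (card (f ` Y))" using finite_subset[OF fY finZ] by simp
    also have "card (f ` Y) = 3" using card_image[OF inj] True by simp
    finally have "card (insert z1 (f ` Y)) = 4" by simp
    moreover have "card (insert z1 (f ` Y)) \<le> card Z" using z1 fY by (intro card_mono[OF finZ]) auto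
    ultimately show ?thesis by (simp add: Z_def)
  qed
qed

end


context G begin

lemma card_two_img: "finite X \<Longrightarrow> finite Y \<Longrightarrow> card (f ` X \<union> g ` Y) \<le> card X + card Y"
  by (rule order_trans[OF card_Un_le]) (intro add_mono card_image_le; simp)

lemma le1_sub: "finite X \<Longrightarrow> card X \<le> 1 \<Longrightarrow> \<exists>p. X \<subseteq> {p}"
proof (cases "X = {}")
  case False
  assume "finite X" "card X \<le> 1"
  then obtain p where "p \<in> X" using False by blast
  then show ?thesis using \<open>finite X\<close> \<open>card X \<le> 1\<close> card_le_Suc0_iff_eq[of X] by auto
qed auto

lemma D_core:
  assumes u: "u \<in> V" and v: "v \<in> V"
    and L1: "lay u (Suc k) = {h, q}" and ho: "h \<noteq> q"
    and L2: "lay u (Suc (Suc k)) = {h', q'}" and hq': "h' \<noteq> q'"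
    and e1: "E h h'" and e2: "E h q'" and e3: "E q h'" and ne: "\<not> E q q'"
    and d: "Suc (Suc (Suc k)) \<le> gdist V E u v"
  shows "3 \<le> card (lay u k) \<and> 3 \<le> card (lay u (Suc (Suc (Suc k)))) \<and>
         7 \<le> card (lay u k) + card (lay u (Suc (Suc (Suc k))))"
proof -
  define A where "A = lay u k"
  define C where "C = lay u (Suc (Suc (Suc k)))"
  define Ah where "Ah = A \<inter> {a. E a h}"
  define Ao where "Ao = A \<inter> {a. E a q}"
  define Ch where "Ch = C \<inter> {c. E h' c}"
  define Co where "Co = C \<inter> {c. E q' c}"
  have gh: "h \<in> V" "gdist V E u h = Suc k" "q \<in> V" "gdist V E u q = Suc k" using L1 by (auto simp: lay_def)
  have gh': "h' \<in> V" "gdist V E u h' = Suc (Suc k)" "q' \<in> V" "gdist V E u q' = Suc (Suc k)" using L2 by (auto simp: lay_def)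
  have gv: "gdist V E u v \<ge> Suc (Suc (Suc k))" using d .
  have finA: "finite A" "finite Ah" "finite Ao" using fin_lay by (auto simp: A_def Ah_def Ao_def)
  have finC: "finite C" "finite Ch" "finite Co" using fin_lay by (auto simp: C_def Ch_def Co_def)
  have inA: "\<And>a. a \<in> A \<longleftrightarrow> a \<in> V \<and> gdist V E u a = k" by (simp add: A_def lay_def)
  have inC: "\<And>a. a \<in> C \<longleftrightarrow> a \<in> V \<and> gdist V E u a = Suc (Suc (Suc k))" by (simp add: C_def lay_def)
  have dA: "Ah \<inter> Ao = {}"
  proof (rule ccontr)
    assume "Ah \<inter> Ao \<noteq> {}"
    then obtain a where a: "a \<in> A" "E a h" "E a q" by (auto simp: Ah_def Ao_def)
    have "a \<noteq> h'" using a(1) gh' inA by auto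
    then show False using common[of h q a h'] ho Esym[OF a(2)] Esym[OF a(3)] e1 e3 by blast
  qed
  have dC: "Ch \<inter> Co = {}"
  proof (rule ccontr)
    assume "Ch \<inter> Co \<noteq> {}"
    then obtain c where c: "c \<in> C" "E h' c" "E q' c" by (auto simp: Ch_def Co_def)
    have "c \<noteq> h" using c(1) gh inC by auto
    then show False using common[of h' q' c h] hq' c Esym[OF e1] Esym[OF e2] by blast
  qed
  have cA: "card A \<ge> card Ah + card Ao"
  proof -
    have "card Ah + card Ao = card (Ah \<union> Ao)" using card_Un_disjoint[OF finA(2,3) dA] by simp
    also have "\<dots> \<le> card A" by (rule card_mono[OF finA(1)]) (auto simp: Ah_def Ao_def)
    finally show ?thesis .
  qed
  have cC: "card C \<ge> card Ch + card Co"
  proof -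
    have "card Ch + card Co = card (Ch \<union> Co)" using card_Un_disjoint[OF finC(2,3) dC] by simp
    also have "\<dots> \<le> card C" by (rule card_mono[OF finC(1)]) (auto simp: Ch_def Co_def)
    finally show ?thesis .
  qed
  have sA: "3 \<le> card Ah + card Ao"
  proof -
    let ?T = "(\<lambda>a. {a, h}) ` Ah \<union> (\<lambda>a. {a, q}) ` Ao"
    have "bd {w \<in> V. gdist V E u w \<le> k} \<subseteq> ?T"
    proof
      fix e assume "e \<in> bd {w \<in> V. gdist V E u w \<le> k}"
      then obtain b c where "e = {b, c}" "b \<in> lay u k" "c \<in> lay u (Suc k)" "E b c"
        using bd_layer[OF u, of k] by blast
      then show "e \<in> ?T" using L1 by (auto simp: Ah_def Ao_def A_def)
    qed
    moreover have "finite ?T" using finA by simp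
    moreover have kd: "k < gdist V E u v" using d by simp
    ultimately have "3 \<le> card ?T" using cut3[OF S_facts(1)[OF u v kd] S_facts(2)[OF u v kd] v S_facts(3)[OF u v kd]] by blast
    then show ?thesis using card_two_img[OF finA(2,3)] by (meson order_trans)
  qed
  have sC: "3 \<le> card Ch + card Co"
  proof -
    let ?T = "(\<lambda>c. {h', c}) ` Ch \<union> (\<lambda>c. {q', c}) ` Co"
    have "bd {w \<in> V. gdist V E u w \<le> Suc (Suc k)} \<subseteq> ?T"
    proof
      fix e assume "e \<in> bd {w \<in> V. gdist V E u w \<le> Suc (Suc k)}"
      then obtain b c where "e = {b, c}" "b \<in> lay u (Suc (Suc k))" "c \<in> lay u (Suc (Suc (Suc k)))" "E b c"
        using bd_layer[OF u, of "Suc (Suc k)"] by blast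
      then show "e \<in> ?T" using L2 by (auto simp: Ch_def Co_def C_def)
    qed
    moreover have "finite ?T" using finC by simp
    moreover have kd: "Suc (Suc k) < gdist V E u v" using d by simp
    ultimately have "3 \<le> card ?T" using cut3[OF S_facts(1)[OF u v kd] S_facts(2)[OF u v kd] v S_facts(3)[OF u v kd]] by blast
    then show ?thesis using card_two_img[OF finC(2,3)] by (meson order_trans)
  qed
  have rA1: "2 \<le> card Ah" if noh: "\<not> E q h"
  proof -
    define S where "S = {w \<in> V. gdist V E u w \<le> k} \<union> {q}"
    let ?T = "(\<lambda>a. {a, h}) ` Ah \<union> {{q, h'}}"
    have "bd S \<subseteq> ?T"
    proof
      fix e assume "e \<in> bd S"
      then obtain x y where e: "e = {x, y}" "E x y" "x \<in> S" "y \<notin> S" unfolding bd_def by blast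
      have yV: "y \<in> V" using Ein[OF e(2)] by simp
      show "e \<in> ?T"
      proof (cases "x = q")
        case True
        have "y \<in> lay u k \<or> y \<in> lay u (Suc k) \<or> y \<in> lay u (Suc (Suc k))"
          using nbr_lay[OF u, of q k y] L1 e(2) True by auto
        moreover have "y \<notin> lay u k" using e(4) by (auto simp: S_def lay_def)
        moreover have "y \<noteq> h" using noh e(2) True by auto
        moreover have "y \<noteq> q" using Eirr e(2) True by auto
        moreover have "y \<noteq> q'" using ne e(2) True by auto
        ultimately have "y = h'" using L1 L2 by auto
        then show ?thesis using e True by auto
      next
        case False
        then have x: "x \<in> V" "gdist V E u x \<le> k" using e(3) by (auto simp: S_def)
        have "gdist V E u y > k" "y \<noteq> q" using e(4) yV by (auto simp: S_def)
        moreover have "gdist V E u y \<le> Suc (gdist V E u x)" "gdist V E u x \<le> Suc (gdist V E u y)"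
          using adj_dist[OF u e(2)] by auto
        ultimately have "gdist V E u y = Suc k" "gdist V E u x = k" using x by auto
        then have "y \<in> lay u (Suc k)" "x \<in> A" using yV x by (auto simp: lay_def A_def)
        then have "y = h" using L1 \<open>y \<noteq> q\<close> by auto
        then show ?thesis using e \<open>x \<in> A\<close> by (auto simp: Ah_def)
      qed
    qed
    moreover have "finite ?T" using finA by simp
    moreover have "S \<subseteq> V" "u \<in> S" "v \<notin> S" using gh gdist_self[OF u] u d gh by (auto simp: S_def)
    ultimately have "3 \<le> card ?T" using cut3 v by blast
    moreover have "card ?T \<le> card Ah + 1"
      by (rule order_trans[OF card_Un_le]) (simp add: card_image_le finA)
    ultimately show ?thesis by simp
  qed
  have rA2: "2 \<le> card Ao" if noh: "\<not> E q h"
  proof (rule ccontr)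
    assume "\<not> 2 \<le> card Ao"
    then obtain p where p: "Ao \<subseteq> {p}" using le1_sub[OF finA(3)] by auto
    have "{y. E q y} \<subseteq> {p, h'}"
    proof
      fix y assume "y \<in> {y. E q y}"
      then have y: "E q y" by simp
      have "y \<in> lay u k \<or> y \<in> lay u (Suc k) \<or> y \<in> lay u (Suc (Suc k))"
        using nbr_lay[OF u, of q k y] L1 y by auto
      moreover have "y \<in> lay u k \<Longrightarrow> y = p" using p Esym[OF y] by (auto simp: Ao_def A_def)
      moreover have "y \<noteq> h" using noh y by auto
      moreover have "y \<noteq> q" using Eirr y by auto
      moreover have "y \<noteq> q'" using ne y by auto
      ultimately show "y \<in> {p, h'}" using L1 L2 by auto
    qed
    then show False using deg3 gh by blast
  qed
  have rC1: "2 \<le> card Ch" if noh: "\<not> E h' q'"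
  proof -
    define S where "S = {w \<in> V. gdist V E u w \<le> Suc k} \<union> {h'}"
    let ?T = "(\<lambda>c. {h', c}) ` Ch \<union> {{h, q'}}"
    have "bd S \<subseteq> ?T"
    proof
      fix e assume "e \<in> bd S"
      then obtain x y where e: "e = {x, y}" "E x y" "x \<in> S" "y \<notin> S" unfolding bd_def by blast
      have yV: "y \<in> V" using Ein[OF e(2)] by simp
      show "e \<in> ?T"
      proof (cases "x = h'")
        case True
        have "y \<in> lay u (Suc k) \<or> y \<in> lay u (Suc (Suc k)) \<or> y \<in> lay u (Suc (Suc (Suc k)))"
          using nbr_lay[OF u, of h' "Suc k" y] L2 e(2) True by auto
        moreover have "y \<notin> lay u (Suc k)" using e(4) by (auto simp: S_def lay_def)
        moreover have "y \<noteq> h'" using Eirr e(2) True by auto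
        moreover have "y \<noteq> q'" using noh e(2) True by auto
        ultimately have "y \<in> C" using L2 by (auto simp: C_def)
        then show ?thesis using e True by (auto simp: Ch_def)
      next
        case False
        then have x: "x \<in> V" "gdist V E u x \<le> Suc k" using e(3) by (auto simp: S_def)
        have "gdist V E u y > Suc k" "y \<noteq> h'" using e(4) yV by (auto simp: S_def)
        moreover have "gdist V E u y \<le> Suc (gdist V E u x)" "gdist V E u x \<le> Suc (gdist V E u y)"
          using adj_dist[OF u e(2)] by auto
        ultimately have "gdist V E u y = Suc (Suc k)" "gdist V E u x = Suc k" using x by auto
        then have "y \<in> lay u (Suc (Suc k))" "x \<in> lay u (Suc k)" using yV x by (auto simp: lay_def)
        then have "y = q'" "x = h \<or> x = q" using L1 L2 \<open>y \<noteq> h'\<close> by auto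
        then have "x = h" using ne e(2) by auto
        then show ?thesis using e \<open>y = q'\<close> by auto
      qed
    qed
    moreover have "finite ?T" using finC by simp
    moreover have "S \<subseteq> V" "u \<in> S" "v \<notin> S" using gh' gdist_self[OF u] u d by (auto simp: S_def)
    ultimately have "3 \<le> card ?T" using cut3 v by blast
    moreover have "card ?T \<le> card Ch + 1"
      by (rule order_trans[OF card_Un_le]) (simp add: card_image_le finC)
    ultimately show ?thesis by simp
  qed
  have rC2: "2 \<le> card Co" if noh: "\<not> E h' q'"
  proof (rule ccontr)
    assume "\<not> 2 \<le> card Co"
    then obtain p where p: "Co \<subseteq> {p}" using le1_sub[OF finC(3)] by auto
    have "{y. E q' y} \<subseteq> {h, p}"
    proof
      fix y assume "y \<in> {y. E q' y}"
      then have y: "E q' y" by simp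
      have "y \<in> lay u (Suc k) \<or> y \<in> lay u (Suc (Suc k)) \<or> y \<in> lay u (Suc (Suc (Suc k)))"
        using nbr_lay[OF u, of q' "Suc k" y] L2 y by auto
      moreover have "y \<in> C \<Longrightarrow> y = p" using p y by (auto simp: Co_def)
      moreover have "y \<noteq> q" using ne Esym[OF y] by auto
      moreover have "y \<noteq> h'" using noh Esym[OF y] by auto
      moreover have "y \<noteq> q'" using Eirr y by auto
      ultimately show "y \<in> {h, p}" using L1 L2 by (auto simp: C_def)
    qed
    then show False using deg3 gh' by blast
  qed
  have notboth: "\<not> (E q h \<and> E h' q')"
  proof
    assume "E q h \<and> E h' q'"
    moreover have "q \<noteq> q'" "h \<noteq> h'" using gh gh' by auto
    ultimately show False using common[of q q' h h'] Esym[OF e2] e3 Esym[of h' q'] by blast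
  qed
  show ?thesis
  proof (cases "E q h")
    case True
    then have "\<not> E h' q'" using notboth by blast
    then show ?thesis using rC1 rC2 sA cA cC unfolding A_def C_def by linarith
  next
    case False
    then show ?thesis using rA1 rA2 sC cA cC unfolding A_def C_def by linarith
  qed
qed

end


context G begin

lemma D_main:
  assumes u: "u \<in> V" and v: "v \<in> V"
    and c1: "card (lay u (Suc k)) = 2" and c2: "card (lay u (Suc (Suc k))) = 2"
    and d: "Suc (Suc (Suc k)) \<le> gdist V E u v"
  shows "3 \<le> card (lay u k) \<and> 3 \<le> card (lay u (Suc (Suc (Suc k)))) \<and>
         7 \<le> card (lay u k) + card (lay u (Suc (Suc (Suc k))))"
proof -
  obtain b1 b2 where B: "lay u (Suc k) = {b1, b2}" "b1 \<noteq> b2" using c1 card_2_iff[of "lay u (Suc k)"] by blast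
  obtain d1 d2 where C: "lay u (Suc (Suc k)) = {d1, d2}" "d1 \<noteq> d2" using c2 card_2_iff[of "lay u (Suc (Suc k))"] by blast
  define P where "P = {(b, c). b \<in> {b1, b2} \<and> c \<in> {d1, d2} \<and> E b c}"
  have finP: "finite P"
    by (rule finite_subset[of _ "{b1, b2} \<times> {d1, d2}"]) (auto simp: P_def)
  have kd: "Suc k < gdist V E u v" using d by simp
  have "bd {w \<in> V. gdist V E u w \<le> Suc k} \<subseteq> (\<lambda>(b, c). {b, c}) ` P"
  proof
    fix e assume "e \<in> bd {w \<in> V. gdist V E u w \<le> Suc k}"
    then obtain b c where "e = {b, c}" "b \<in> lay u (Suc k)" "c \<in> lay u (Suc (Suc k))" "E b c"
      using bd_layer[OF u, of "Suc k"] by blast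
    then show "e \<in> (\<lambda>(b, c). {b, c}) ` P" using B C unfolding P_def by blast
  qed
  then have "3 \<le> card ((\<lambda>(b, c). {b, c}) ` P)"
    using cut3[OF S_facts(1)[OF u v kd] S_facts(2)[OF u v kd] v S_facts(3)[OF u v kd]] finP by blast
  also have "\<dots> \<le> card P" using card_image_le[OF finP] .
  finally have cP: "3 \<le> card P" .
  have gb: "gdist V E u b1 = Suc k" "gdist V E u b2 = Suc k" using B by (auto simp: lay_def)
  have gc: "gdist V E u d1 = Suc (Suc k)" "gdist V E u d2 = Suc (Suc k)" using C by (auto simp: lay_def)
  have not4: "\<not> (E b1 d1 \<and> E b1 d2 \<and> E b2 d1 \<and> E b2 d2)"
    using common[of b1 b2 d1 d2] B C by blast
  have key: "E h h' \<and> E h q' \<and> E q h'"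
    if hq: "{h, q} = {b1, b2}" "h \<noteq> q" and hq': "{h', q'} = {d1, d2}" "h' \<noteq> q'" and nq: "\<not> E q q'"
    for h q h' q'
  proof -
    have sub: "P \<subseteq> {(h, h'), (h, q'), (q, h')}"
    proof
      fix p assume "p \<in> P"
      then obtain b c where p: "p = (b, c)" "b \<in> {h, q}" "c \<in> {h', q'}" "E b c"
        unfolding P_def using hq hq' by auto
      then show "p \<in> {(h, h'), (h, q'), (q, h')}" using nq by auto
    qed
    have "card {(h, h'), (h, q'), (q, h')} = 3" using hq(2) hq'(2) by auto
    then have "P = {(h, h'), (h, q'), (q, h')}" using card_seteq[OF _ sub] cP by auto
    then have "(h, h') \<in> P" "(h, q') \<in> P" "(q, h') \<in> P" by auto
    then show ?thesis unfolding P_def by auto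
  qed
  have "\<not> E b1 d1 \<or> \<not> E b1 d2 \<or> \<not> E b2 d1 \<or> \<not> E b2 d2" using not4 by blast
  then show ?thesis
  proof (elim disjE)
    assume n: "\<not> E b1 d1"
    have "E b2 d2 \<and> E b2 d1 \<and> E b1 d2" using key[of b2 b1 d2 d1] B C n by (auto simp: insert_commute)
    then show ?thesis using D_core[OF u v _ _ _ _ _ _ _ n d, of b2 d2] B C by (auto simp: insert_commute)
  next
    assume n: "\<not> E b1 d2"
    have "E b2 d1 \<and> E b2 d2 \<and> E b1 d1" using key[of b2 b1 d1 d2] B C n by (auto simp: insert_commute)
    then show ?thesis using D_core[OF u v _ _ _ _ _ _ _ n d, of b2 d1] B C by (auto simp: insert_commute)
  next
    assume n: "\<not> E b2 d1"
    have "E b1 d2 \<and> E b1 d1 \<and> E b2 d2" using key[of b1 b2 d2 d1] B C n by (auto simp: insert_commute)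
    then show ?thesis using D_core[OF u v _ _ _ _ _ _ _ n d, of b1 d2] B C by (auto simp: insert_commute)
  next
    assume n: "\<not> E b2 d2"
    have "E b1 d1 \<and> E b1 d2 \<and> E b2 d1" using key[of b1 b2 d1 d2] B C n by (auto simp: insert_commute)
    then show ?thesis using D_core[OF u v _ _ _ _ _ _ _ n d, of b1 d1] B C by (auto simp: insert_commute)
  qed
qed

end


context G begin

lemma main_ineq: "5 * diameter V E + 3 \<le> 2 * card V"
proof -
  define Ds where "Ds = {gdist V E u v | u v. u \<in> V \<and> v \<in> V}"
  have "Ds = (\<lambda>(u, v). gdist V E u v) ` (V \<times> V)" unfolding Ds_def by auto
  then have finD: "finite Ds" using finV by simp
  have "V \<noteq> {}" using cardV by auto
  then have neD: "Ds \<noteq> {}" unfolding Ds_def by auto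
  have "diameter V E \<in> Ds" unfolding diameter_def Ds_def[symmetric] using Max_in[OF finD neD] .
  then obtain u v where uv: "u \<in> V" "v \<in> V" "diameter V E = gdist V E u v" unfolding Ds_def by blast
  define d where "d = gdist V E u v"
  define n where "n = (\<lambda>i. card (lay u i))"
  show ?thesis
  proof (cases "d = 0")
    case True
    then show ?thesis using uv cardV d_def by simp
  next
    case False
    have sb: "5 * d + 3 \<le> 2 * (\<Sum>i\<le>d. n i)"
    proof (rule seq_bound)
      show "1 \<le> d" using False by simp
      show "n 0 = 1" using lay_0[OF uv(1)] by (simp add: n_def)
      show "3 \<le> n i * n (Suc i)" if "i < d" for i
        using C1[OF uv(1,2)] that by (simp add: n_def d_def)
      show "4 \<le> n (i + 2)" if h1: "n i = 1" and h2: "i + 2 \<le> d" for i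
      proof -
        obtain x where "lay u i = {x}" using card_1_singletonE[OF h1[unfolded n_def]] by blast
        then show ?thesis using B4[OF uv(1,2)] h2 by (simp add: n_def d_def)
      qed
      show "3 \<le> n (i - 2)" if h1: "n i = 1" and h2: "2 \<le> i" "i \<le> d" for i
      proof -
        obtain x where "lay u i = {x}" using card_1_singletonE[OF h1[unfolded n_def]] by blast
        then show ?thesis using C3[OF uv(1)] h2(1) by (simp add: n_def)
      qed
      show "3 \<le> n (i - 1) \<and> 3 \<le> n (i + 2) \<and> 7 \<le> n (i - 1) + n (i + 2)"
        if h: "n i = 2" "n (Suc i) = 2" "1 \<le> i" "i + 2 \<le> d" for i
      proof -
        obtain k where k: "i = Suc k" using h(3) by (cases i) auto
        show ?thesis using D_main[OF uv(1,2), of k] h k by (simp add: n_def d_def)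
      qed
    qed
    have "(\<Sum>i\<le>d. n i) = card (\<Union>i\<le>d. lay u i)"
      unfolding n_def by (rule card_UN_disjoint[symmetric]) (auto simp: fin_lay, auto simp: lay_def)
    also have "\<dots> \<le> card V" by (rule card_mono[OF finV]) (auto simp: lay_def)
    finally show ?thesis using sb uv(3) d_def by simp
  qed
qed

end


theorem theorem1:
  fixes V :: "'a set" and E :: "'a \<Rightarrow> 'a \<Rightarrow> bool"
  assumes "simple_graph V E"
    and "connected_graph V E"
    and "C4_free E"
    and "edge_connectivity_ge V E 3"
  shows "real (diameter V E) \<le> (2 * real (card V) - 3) / 5"
proof -
  interpret G V E using assms by unfold_locales
  have "5 * diameter V E + 3 \<le> 2 * card V" by (rule main_ineq)
  then have "real (5 * diameter V E + 3) \<le> real (2 * card V)" by (simp only: of_nat_le_iff)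
  then show ?thesis by simp
qed

end
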